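(* Let $G$ be any GP 2 host graph in which every node is marked grey and is not a root and every edge is unmarked, with $n$ nodes and $m$ edges. When the GP 2 program is-dag is executed on $G$ (via the GP 2-to-C compiler, under the cost model below), it terminates in time $\mathrm{O}(n+m)$, i.e. linear in the size of $G$.
   Context: GP 2 semantics. Host graphs are finite directed graphs whose nodes and edges carry labels (lists of integers and strings) and marks (nodes: unmarked, red, green, blue, grey; edges: unmarked, red, green, blue, dashed); some nodes are roots. A rule is applied by finding an injective label- and mark-compatible match of its left-hand side (mark "any" matches every mark; roots match roots) satisfying the dangling condition, then changing matched items as prescribed by the right-hand side. Commands: a rule set call applies one applicable rule, failing if none applies; $P;Q$ sequencing; $P!$ iterates $P$ until it fails (break exits the innermost loop); "try $C$ then $P$ else $Q$" runs $C$ and continues with $P$ on its result if it succeeded, else $Q$ on the original graph; "if $C$ then $P$ else $Q$" runs $C$ on a copy then $P$ or $Q$ on the original; fail causes failure. Cost model (updated GP 2-to-C compiler). Host nodes are stored in separate linked lists per node mark, roots in a list, and each node has a two-dimensional array of linked lists of incident edges indexed by edge mark and orientation (incoming, outgoing, loop). Each elementary operation takes constant time: fetch first/next node with a given mark; fetch first/next root; given a node, fetch first/next incoming, outgoing or loop edge with a given mark; read degrees, mark, root status, source, target; set/clear/test a "matched" flag. Matching is a search using these operations; completing a rule application once a match is found takes constant time for rules that only change marks/roots. Running time is the total cost; the size of $G$ is $n+m$. The program is-dag (labels unchanged; rule edges directed from node 1 to node 2): Main = (init; DFS!; try unroot else break)!; Check DFS = try next_edge then (try {move, ignore} else (set_flag;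 break)) else (try loop; try back else break) Check = if flag then fail - init: grey non-root node becomes a red root. - unroot: red root becomes blue non-root. - set_flag: red root becomes green root. - flag: green root; no change. - next_edge: red root 1, node 2 of any mark, unmarked edge 1→2; edge becomes red. - ignore: red root 1, blue node 2, red edge 1→2; edge becomes blue. - move: red root 1, grey node 2, red edge 1→2; node 1 becomes red non-root, node 2 red root, edge dashed. - back: red non-root 1, red root 2, dashed edge 1→2; node 1 becomes red root, node 2 blue non-root, edge blue. - loop: red root with an unmarked loop; node becomes green root. *)

theory Defs
  imports Main
begin

text \<open>Labels are omitted: every rule of is-dag matches arbitrary labels and leaves
them unchanged, so labels influence neither matching nor cost.\<close>

datatype nmark = NUnm | NRed | NGreen | NBlue | NGrey
datatype emark = EUnm | ERed | EGreen | EBlue | EDashed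
datatype orient = InE | OutE | LoopE

text \<open>The abstract host graph (nodes, edges, source, target, marks, root flags)
together with the compiler's linked lists: one node list per node mark, a root list,
and per node a two-dimensional array of incident-edge lists indexed by edge mark and
orientation.  Lists are modelled by HOL lists (order = traversal order).\<close>

record hstate =
  V    :: "nat set"
  E    :: "nat set"
  src  :: "nat \<Rightarrow> nat"
  tgt  :: "nat \<Rightarrow> nat"
  nmk  :: "nat \<Rightarrow> nmark"
  emk  :: "nat \<Rightarrow> emark"
  rt   :: "nat \<Rightarrow> bool"
  nlist :: "nmark \<Rightarrow> nat list"
  rlist :: "nat list"
  elist :: "nat \<Rightarrow> emark \<Rightarrow> orient \<Rightarrow> nat list"

definition valid_rep :: "hstate \<Rightarrow> bool" where
  "valid_rep s \<longleftrightarrow>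
     finite (V s) \<and> finite (E s) \<and>
     (\<forall>e\<in>E s. src s e \<in> V s \<and> tgt s e \<in> V s) \<and>
     (\<forall>k. distinct (nlist s k) \<and> set (nlist s k) = {v\<in>V s. nmk s v = k}) \<and>
     distinct (rlist s) \<and> set (rlist s) = {v\<in>V s. rt s v} \<and>
     (\<forall>v\<in>V s. \<forall>k.
        distinct (elist s v k OutE) \<and>
        set (elist s v k OutE) = {e\<in>E s. src s e = v \<and> tgt s e \<noteq> v \<and> emk s e = k} \<and>
        distinct (elist s v k InE) \<and>
        set (elist s v k InE) = {e\<in>E s. tgt s e = v \<and> src s e \<noteq> v \<and> emk s e = k} \<and>
        distinct (elist s v k LoopE) \<and>
        set (elist s v k LoopE) = {e\<in>E s. src s e = v \<and> tgt s e = v \<and> emk s e = k})"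

subsection \<open>Constant-time updates (relinking in the lists; new position = front)\<close>

definition set_nmark :: "nat \<Rightarrow> nmark \<Rightarrow> hstate \<Rightarrow> hstate" where
  "set_nmark v k s = s\<lparr>nlist := (nlist s)(nmk s v := removeAll v (nlist s (nmk s v)),
                                          k := v # removeAll v (nlist s k)),
                        nmk := (nmk s)(v := k)\<rparr>"

definition set_root :: "nat \<Rightarrow> bool \<Rightarrow> hstate \<Rightarrow> hstate" where
  "set_root v b s = s\<lparr>rt := (rt s)(v := b),
                       rlist := (if b then v # removeAll v (rlist s) else removeAll v (rlist s))\<rparr>"

definition modl :: "(nat \<Rightarrow> emark \<Rightarrow> orient \<Rightarrow> nat list) \<Rightarrow> nat \<Rightarrow> emark \<Rightarrow> orient
                    \<Rightarrow> (nat list \<Rightarrow> nat list) \<Rightarrow> (nat \<Rightarrow> emark \<Rightarrow> orient \<Rightarrow> nat list)" where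
  "modl el v k d f = el(v := (el v)(k := (el v k)(d := f (el v k d))))"

definition set_emark :: "nat \<Rightarrow> emark \<Rightarrow> hstate \<Rightarrow> hstate" where
  "set_emark e k s =
     (let a = src s e; b = tgt s e; k0 = emk s e; el = elist s in
      s\<lparr>elist := (if a = b then modl (modl el a k0 LoopE (removeAll e)) a k LoopE (Cons e)
                  else modl (modl (modl (modl el a k0 OutE (removeAll e)) a k OutE (Cons e))
                                  b k0 InE (removeAll e)) b k InE (Cons e)),
        emk := (emk s)(e := k)\<rparr>)"

text \<open>Traversing a linked list: every fetch (including the final fetch returning
null) costs 1; the candidate test returns its own cost.\<close>

fun find :: "('a \<Rightarrow> 'b option \<times> nat) \<Rightarrow> 'a list \<Rightarrow> 'b option \<times> nat" where
  "find f [] = (None, 1)"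
| "find f (x # xs) =
     (case f x of
        (Some r, c) \<Rightarrow> (Some r, Suc c)
      | (None, c) \<Rightarrow> (case find f xs of (r, c') \<Rightarrow> (r, Suc (c + c'))))"

text \<open>Completing a rule application after a match is found costs a constant (1).\<close>

fun apply_m :: "'m option \<times> nat \<Rightarrow> ('m \<Rightarrow> hstate) \<Rightarrow> hstate option \<times> nat" where
  "apply_m (Some x, c) g = (Some (g x), Suc c)"
| "apply_m (None, c) g = (None, c)"

type_synonym rule = "hstate \<Rightarrow> hstate option \<times> nat"

text \<open>Search plans as generated by the compiler: root nodes of the LHS are
searched first via the root list, the remaining items are reached by following
incident edges; a non-root LHS node without root node is found via the node list of
its mark.\<close>

definition root_with :: "nmark \<Rightarrow> hstate \<Rightarrow> nat option \<times> nat" where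
  "root_with k s = find (\<lambda>v. (if nmk s v = k then Some v else None, 1)) (rlist s)"

definition red_root_out :: "emark \<Rightarrow> (nat \<Rightarrow> bool) \<Rightarrow> hstate \<Rightarrow> (nat \<times> nat) option \<times> nat" where
  "red_root_out ek P s =
     find (\<lambda>v. if nmk s v = NRed then
                  (case find (\<lambda>e. (if tgt s e \<noteq> v \<and> P (tgt s e) then Some (v, e) else None, 1))
                             (elist s v ek OutE) of (r, c) \<Rightarrow> (r, Suc c))
                else (None, 1)) (rlist s)"

definition r_init :: rule where
  "r_init s = apply_m (find (\<lambda>v. (Some v, 1)) (nlist s NGrey))
                      (\<lambda>v. set_root v True (set_nmark v NRed s))"

definition r_unroot :: rule where
  "r_unroot s = apply_m (root_with NRed s) (\<lambda>v. set_root v False (set_nmark v NBlue s))"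

definition r_set_flag :: rule where
  "r_set_flag s = apply_m (root_with NRed s) (\<lambda>v. set_nmark v NGreen s)"

definition r_flag :: rule where
  "r_flag s = apply_m (root_with NGreen s) (\<lambda>v. s)"

definition r_next_edge :: rule where
  "r_next_edge s = apply_m (red_root_out EUnm (\<lambda>w. True) s) (\<lambda>(v, e). set_emark e ERed s)"

definition r_ignore :: rule where
  "r_ignore s = apply_m (red_root_out ERed (\<lambda>w. nmk s w = NBlue) s) (\<lambda>(v, e). set_emark e EBlue s)"

definition r_move :: rule where
  "r_move s = apply_m (red_root_out ERed (\<lambda>w. nmk s w = NGrey) s)
     (\<lambda>(v, e). set_emark e EDashed (set_root (tgt s e) True (set_nmark (tgt s e) NRed
                (set_root v False s))))"

definition r_back :: rule where
  "r_back s = apply_m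
     (find (\<lambda>w. if nmk s w = NRed then
                  (case find (\<lambda>e. (if src s e \<noteq> w \<and> nmk s (src s e) = NRed
                                    then Some (src s e, w, e) else None, 1))
                             (elist s w EDashed InE) of (r, c) \<Rightarrow> (r, Suc c))
                else (None, 1)) (rlist s))
     (\<lambda>(v, w, e). set_emark e EBlue (set_root w False (set_nmark w NBlue (set_root v True s))))"

definition r_loop :: rule where
  "r_loop s = apply_m
     (find (\<lambda>v. if nmk s v = NRed then
                  (case find (\<lambda>e. (Some (v, e), 1)) (elist s v EUnm LoopE) of (r, c) \<Rightarrow> (r, Suc c))
                else (None, 1)) (rlist s))
     (\<lambda>(v, e). set_nmark v NGreen s)"

fun apply_rs :: "rule list \<Rightarrow> hstate \<Rightarrow> hstate option \<times> nat" where
  "apply_rs [] s = (None, 0)"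
| "apply_rs (r # rs) s =
     (case r s of
        (Some s', c) \<Rightarrow> (Some s', c)
      | (None, c) \<Rightarrow> (case apply_rs rs s of (x, c') \<Rightarrow> (x, c + c')))"

datatype cmd = Call "rule list" | Seq cmd cmd | Loop cmd | Try cmd cmd cmd | If cmd cmd cmd
  | Skip | Fail | Break

datatype outcome = ROk hstate | RFail | RBrk hstate

definition addc :: "nat \<Rightarrow> (outcome \<times> nat) option \<Rightarrow> (outcome \<times> nat) option" where
  "addc c x = map_option (\<lambda>(r, c'). (r, c + c')) x"

text \<open>Fuel-indexed interpreter: None means out of fuel.  Restoring the graph after a failed condition of try / if, or
after a failed loop body, is charged the cost of the undone computation again
(an upper bound for undoing the recorded changes).\<close>

fun exec :: "nat \<Rightarrow> cmd \<Rightarrow> hstate \<Rightarrow> (outcome \<times> nat) option" where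
  "exec 0 _ _ = None"
| "exec (Suc f) Skip s = Some (ROk s, 1)"
| "exec (Suc f) Fail s = Some (RFail, 1)"
| "exec (Suc f) Break s = Some (RBrk s, 1)"
| "exec (Suc f) (Call rs) s =
     (case apply_rs rs s of (Some s', c) \<Rightarrow> Some (ROk s', Suc c) | (None, c) \<Rightarrow> Some (RFail, Suc c))"
| "exec (Suc f) (Seq P Q) s =
     (case exec f P s of
        None \<Rightarrow> None
      | Some (ROk s', c) \<Rightarrow> addc c (exec f Q s')
      | Some (r, c) \<Rightarrow> Some (r, c))"
| "exec (Suc f) (Loop P) s =
     (case exec f P s of
        None \<Rightarrow> None
      | Some (ROk s', c) \<Rightarrow> addc (Suc c) (exec f (Loop P) s')
      | Some (RFail, c) \<Rightarrow> Some (ROk s, Suc (2 * c))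
      | Some (RBrk s', c) \<Rightarrow> Some (ROk s', Suc c))"
| "exec (Suc f) (Try C P Q) s =
     (case exec f C s of
        None \<Rightarrow> None
      | Some (ROk s', c) \<Rightarrow> addc (Suc c) (exec f P s')
      | Some (RFail, c) \<Rightarrow> addc (Suc (2 * c)) (exec f Q s)
      | Some (RBrk s', c) \<Rightarrow> Some (RBrk s', Suc c))"
| "exec (Suc f) (If C P Q) s =
     (case exec f C s of
        None \<Rightarrow> None
      | Some (RFail, c) \<Rightarrow> addc (Suc (2 * c)) (exec f Q s)
      | Some (_, c) \<Rightarrow> addc (Suc (2 * c)) (exec f P s))"

definition DFS :: cmd where
  "DFS = Try (Call [r_next_edge])
             (Try (Call [r_move, r_ignore]) Skip (Seq (Call [r_set_flag]) Break))
             (Seq (Try (Call [r_loop]) Skip Skip) (Try (Call [r_back]) Skip Break))"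

definition Check :: cmd where
  "Check = If (Call [r_flag]) Fail Skip"

definition is_dag :: cmd where
  "is_dag = Seq (Loop (Seq (Call [r_init]) (Seq (Loop DFS) (Try (Call [r_unroot]) Skip Break)))) Check"

end

theory Submission
  imports Defs
begin


lemma set_nmark_simps[simp]:
  "V (set_nmark v k s) = V s" "E (set_nmark v k s) = E s" "src (set_nmark v k s) = src s"
  "tgt (set_nmark v k s) = tgt s" "emk (set_nmark v k s) = emk s" "rt (set_nmark v k s) = rt s"
  "rlist (set_nmark v k s) = rlist s" "elist (set_nmark v k s) = elist s"
  "nmk (set_nmark v k s) = (nmk s)(v := k)"
  by (simp_all add: set_nmark_def)

lemma set_root_simps[simp]:
  "V (set_root v b s) = V s" "E (set_root v b s) = E s" "src (set_root v b s) = src s"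
  "tgt (set_root v b s) = tgt s" "emk (set_root v b s) = emk s" "rt (set_root v b s) = (rt s)(v := b)"
  "nlist (set_root v b s) = nlist s" "elist (set_root v b s) = elist s"
  "nmk (set_root v b s) = nmk s"
  by (simp_all add: set_root_def)

lemma set_emark_simps[simp]:
  "V (set_emark e k s) = V s" "E (set_emark e k s) = E s" "src (set_emark e k s) = src s"
  "tgt (set_emark e k s) = tgt s" "emk (set_emark e k s) = (emk s)(e := k)" "rt (set_emark e k s) = rt s"
  "nlist (set_emark e k s) = nlist s" "rlist (set_emark e k s) = rlist s"
  "nmk (set_emark e k s) = nmk s"
  by (simp_all add: set_emark_def Let_def)

lemma valid_set_nmark: "valid_rep s \<Longrightarrow> v \<in> V s \<Longrightarrow> valid_rep (set_nmark v k s)"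
  unfolding valid_rep_def
  apply (simp add: set_nmark_def)
  apply (auto simp: distinct_removeAll)
  done

lemma valid_set_root: "valid_rep s \<Longrightarrow> v \<in> V s \<Longrightarrow> valid_rep (set_root v b s)"
  unfolding valid_rep_def
  apply (simp add: set_root_def)
  apply (auto simp: distinct_removeAll)
  done

lemma valid_set_emark: "valid_rep s \<Longrightarrow> e \<in> E s \<Longrightarrow> valid_rep (set_emark e k s)"
  unfolding valid_rep_def
  apply (simp add: set_emark_def Let_def modl_def)
  apply (auto simp: distinct_removeAll)
  done



lemma exec_Suc: "exec f C s = Some x \<Longrightarrow> exec (Suc f) C s = Some x"
proof (induction f arbitrary: C s x)
  case 0
  then show ?case by simp
next
  case (Suc f)
  show ?case
  proof (cases C)
    case (Seq P Q)
    show ?thesis using Suc.prems unfolding Seq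
      apply (simp only: exec.simps)
      apply (cases "exec f P s")
       apply simp
      apply (frule Suc.IH)
      apply (auto simp: addc_def split: outcome.splits)
      apply (auto dest!: Suc.IH)
      done
  next
    case (Loop P)
    show ?thesis using Suc.prems unfolding Loop
      apply (simp only: exec.simps)
      apply (cases "exec f P s")
       apply simp
      apply (frule Suc.IH)
      apply (auto simp: addc_def split: outcome.splits)
      apply (auto dest!: Suc.IH)
      done
  next
    case (Try C1 P Q)
    show ?thesis using Suc.prems unfolding Try
      apply (simp only: exec.simps)
      apply (cases "exec f C1 s")
       apply simp
      apply (frule Suc.IH)
      apply (auto simp: addc_def split: outcome.splits)
      apply (auto dest!: Suc.IH)
      done
  next
    case (If C1 P Q)
    show ?thesis using Suc.prems unfolding If
      apply (simp only: exec.simps)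
      apply (cases "exec f C1 s")
       apply simp
      apply (frule Suc.IH)
      apply (auto simp: addc_def split: outcome.splits)
      apply (auto dest!: Suc.IH)
      done
  qed (use Suc.prems in simp_all)
qed

lemma exec_mono: assumes "exec f C s = Some x" "f \<le> f'" shows "exec f' C s = Some x"
  using assms(2)
proof (induction f')
  case 0
  then show ?case using assms(1) by simp
next
  case (Suc n)
  then show ?case using assms(1) exec_Suc by (metis le_Suc_eq)
qed

definition runs :: "hstate \<Rightarrow> cmd \<Rightarrow> (outcome \<Rightarrow> nat \<Rightarrow> bool) \<Rightarrow> bool" where
  "runs s C Q \<longleftrightarrow> (\<exists>f r c. exec f C s = Some (r, c) \<and> Q r c)"

lemma runs_conseq: "runs s C Q \<Longrightarrow> (\<And>r c. Q r c \<Longrightarrow> Q' r c) \<Longrightarrow> runs s C Q'"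
  unfolding runs_def by blast

lemma runs_Skip: "Q (ROk s) 1 \<Longrightarrow> runs s Skip Q"
  unfolding runs_def by (rule exI[of _ 1]) simp

lemma runs_Break: "Q (RBrk s) 1 \<Longrightarrow> runs s Break Q"
  unfolding runs_def by (rule exI[of _ 1]) simp

lemma runs_Fail: "Q RFail 1 \<Longrightarrow> runs s Fail Q"
  unfolding runs_def by (rule exI[of _ 1]) simp

lemma runs_Call: "Q (case fst (apply_rs rs s) of Some s' \<Rightarrow> ROk s' | None \<Rightarrow> RFail)
                    (Suc (snd (apply_rs rs s))) \<Longrightarrow> runs s (Call rs) Q"
  unfolding runs_def
  by (rule exI[of _ 1]) (auto split: prod.splits option.splits)

lemma runs_Seq:
  assumes "runs s P Q1"
    and "\<And>s' c. Q1 (ROk s') c \<Longrightarrow> runs s' P2 (\<lambda>r c'. Q r (c + c'))"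
    and "\<And>c. Q1 RFail c \<Longrightarrow> Q RFail c"
    and "\<And>s' c. Q1 (RBrk s') c \<Longrightarrow> Q (RBrk s') c"
  shows "runs s (Seq P P2) Q"
proof -
  from assms(1) obtain f r c where ex: "exec f P s = Some (r, c)" and q: "Q1 r c"
    unfolding runs_def by blast
  show ?thesis
  proof (cases r)
    case (ROk s')
    with assms(2) q obtain f2 r2 c2 where ex2: "exec f2 P2 s' = Some (r2, c2)" and q2: "Q r2 (c + c2)"
      unfolding runs_def by blast
    have "exec (Suc (max f f2)) (Seq P P2) s = Some (r2, c + c2)"
      using exec_mono[OF ex, of "max f f2"] exec_mono[OF ex2, of "max f f2"] ROk
      by (simp add: addc_def)
    with q2 show ?thesis unfolding runs_def by blast
  next
    case RFail
    have "exec (Suc f) (Seq P P2) s = Some (RFail, c)" using ex RFail by simp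
    with assms(3) q RFail show ?thesis unfolding runs_def by blast
  next
    case (RBrk s')
    have "exec (Suc f) (Seq P P2) s = Some (RBrk s', c)" using ex RBrk by simp
    with assms(4) q RBrk show ?thesis unfolding runs_def by blast
  qed
qed

lemma runs_Try:
  assumes "runs s C Q1"
    and "\<And>s' c. Q1 (ROk s') c \<Longrightarrow> runs s' P (\<lambda>r c'. Q r (Suc c + c'))"
    and "\<And>c. Q1 RFail c \<Longrightarrow> runs s P2 (\<lambda>r c'. Q r (Suc (2 * c) + c'))"
    and "\<And>s' c. Q1 (RBrk s') c \<Longrightarrow> Q (RBrk s') (Suc c)"
  shows "runs s (Try C P P2) Q"
proof -
  from assms(1) obtain f r c where ex: "exec f C s = Some (r, c)" and q: "Q1 r c"
    unfolding runs_def by blast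
  show ?thesis
  proof (cases r)
    case (ROk s')
    with assms(2) q obtain f2 r2 c2 where ex2: "exec f2 P s' = Some (r2, c2)" and q2: "Q r2 (Suc c + c2)"
      unfolding runs_def by blast
    have "exec (Suc (max f f2)) (Try C P P2) s = Some (r2, Suc c + c2)"
      using exec_mono[OF ex, of "max f f2"] exec_mono[OF ex2, of "max f f2"] ROk
      by (simp add: addc_def)
    with q2 show ?thesis unfolding runs_def by blast
  next
    case RFail
    with assms(3) q obtain f2 r2 c2 where ex2: "exec f2 P2 s = Some (r2, c2)" and q2: "Q r2 (Suc (2*c) + c2)"
      unfolding runs_def by blast
    have "exec (Suc (max f f2)) (Try C P P2) s = Some (r2, Suc (2*c) + c2)"
      using exec_mono[OF ex, of "max f f2"] exec_mono[OF ex2, of "max f f2"] RFail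
      by (simp add: addc_def)
    with q2 show ?thesis unfolding runs_def by blast
  next
    case (RBrk s')
    have "exec (Suc f) (Try C P P2) s = Some (RBrk s', Suc c)" using ex RBrk by simp
    with assms(4) q RBrk show ?thesis unfolding runs_def by blast
  qed
qed

lemma runs_If:
  assumes "runs s C Q1"
    and "\<And>r c. Q1 r c \<Longrightarrow> r \<noteq> RFail \<Longrightarrow> runs s P (\<lambda>r c'. Q r (Suc (2 * c) + c'))"
    and "\<And>c. Q1 RFail c \<Longrightarrow> runs s P2 (\<lambda>r c'. Q r (Suc (2 * c) + c'))"
  shows "runs s (If C P P2) Q"
proof -
  from assms(1) obtain f r c where ex: "exec f C s = Some (r, c)" and q: "Q1 r c"
    unfolding runs_def by blast
  show ?thesis
  proof (cases "r = RFail")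
    case False
    with assms(2) q obtain f2 r2 c2 where ex2: "exec f2 P s = Some (r2, c2)" and q2: "Q r2 (Suc (2*c) + c2)"
      unfolding runs_def by blast
    have "exec (Suc (max f f2)) (If C P P2) s = Some (r2, Suc (2*c) + c2)"
      using exec_mono[OF ex, of "max f f2"] exec_mono[OF ex2, of "max f f2"] False
      by (cases r) (simp_all add: addc_def)
    with q2 show ?thesis unfolding runs_def by blast
  next
    case True
    with assms(3) q obtain f2 r2 c2 where ex2: "exec f2 P2 s = Some (r2, c2)" and q2: "Q r2 (Suc (2*c) + c2)"
      unfolding runs_def by blast
    have "exec (Suc (max f f2)) (If C P P2) s = Some (r2, Suc (2*c) + c2)"
      using exec_mono[OF ex, of "max f f2"] exec_mono[OF ex2, of "max f f2"] True
      by (simp add: addc_def)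
    with q2 show ?thesis unfolding runs_def by blast
  qed
qed

lemma runs_Loop:
  fixes Pot :: "hstate \<Rightarrow> nat"
  assumes body: "\<And>s. I s \<Longrightarrow> runs s P (\<lambda>r c. case r of
        ROk s' \<Rightarrow> I s' \<and> Pot s' < Pot s \<and> c + K * Pot s' \<le> K * Pot s + B
      | RBrk s' \<Rightarrow> J s' \<and> Pot s' \<le> Pot s \<and> c + K * Pot s' \<le> K * Pot s + B
      | RFail \<Rightarrow> J s \<and> c \<le> B)"
  shows "I s \<Longrightarrow> runs s (Loop P) (\<lambda>r c. \<exists>s'. r = ROk s' \<and> J s' \<and> Pot s' \<le> Pot s \<and>
            c + (K + B + 1) * Pot s' \<le> (K + B + 1) * Pot s + (2 * B + 1))"
proof (induction "Pot s" arbitrary: s rule: less_induct)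
  case less
  from body[OF less.prems] obtain f r c where ex: "exec f P s = Some (r, c)" and
    q: "case r of
        ROk s' \<Rightarrow> I s' \<and> Pot s' < Pot s \<and> c + K * Pot s' \<le> K * Pot s + B
      | RBrk s' \<Rightarrow> J s' \<and> Pot s' \<le> Pot s \<and> c + K * Pot s' \<le> K * Pot s + B
      | RFail \<Rightarrow> J s \<and> c \<le> B"
    unfolding runs_def by blast
  show ?case
  proof (cases r)
    case (ROk s')
    with q have I': "I s'" and lt: "Pot s' < Pot s" and cb: "c + K * Pot s' \<le> K * Pot s + B" by auto
    from less.hyps[OF lt I'] obtain f2 r2 c2 where ex2: "exec f2 (Loop P) s' = Some (r2, c2)"
      and q2: "\<exists>s''. r2 = ROk s'' \<and> J s'' \<and> Pot s'' \<le> Pot s' \<and>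
            c2 + (K + B + 1) * Pot s'' \<le> (K + B + 1) * Pot s' + (2 * B + 1)"
      unfolding runs_def by blast
    obtain s'' where r2: "r2 = ROk s''" and J'': "J s''" and le'': "Pot s'' \<le> Pot s'"
      and c2b: "c2 + (K + B + 1) * Pot s'' \<le> (K + B + 1) * Pot s' + (2 * B + 1)" using q2 by blast
    have exL: "exec (Suc (max f f2)) (Loop P) s = Some (r2, Suc c + c2)"
      using exec_mono[OF ex, of "max f f2"] exec_mono[OF ex2, of "max f f2"] ROk
      by (simp add: addc_def)
    define d where "d = Pot s - Pot s' - 1"
    have d: "Pot s = Pot s' + Suc d" using lt unfolding d_def by simp
    have "K * Pot s = K * Pot s' + K * Suc d" using d by (simp add: algebra_simps)
    with cb have c1: "c \<le> K * Suc d + B" by linarith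
    have "(K + B + 1) * Pot s = (K + B + 1) * Pot s' + (K + B + 1) * Suc d"
      using d by (simp add: algebra_simps)
    moreover have "(K + B + 1) * Suc d \<ge> K * Suc d + B + 1"
      by (simp add: algebra_simps)
    ultimately have "Suc c + c2 + (K + B + 1) * Pot s'' \<le> (K + B + 1) * Pot s + (2 * B + 1)"
      using c1 c2b by linarith
    have X: "\<exists>s'. r2 = ROk s' \<and> J s' \<and> Pot s' \<le> Pot s \<and>
            Suc c + c2 + (K + B + 1) * Pot s' \<le> (K + B + 1) * Pot s + (2 * B + 1)"
      using r2 J'' le'' lt \<open>Suc c + c2 + (K + B + 1) * Pot s'' \<le> (K + B + 1) * Pot s + (2 * B + 1)\<close> by auto
    show ?thesis unfolding runs_def
      by (rule exI, rule exI, rule exI, rule conjI[OF exL X])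
  next
    case (RBrk s')
    with q have J': "J s'" and le: "Pot s' \<le> Pot s" and cb: "c + K * Pot s' \<le> K * Pot s + B" by auto
    have exL: "exec (Suc f) (Loop P) s = Some (ROk s', Suc c)" using ex RBrk by simp
    have "(B + 1) * Pot s' \<le> (B + 1) * Pot s" by (rule mult_le_mono2[OF le])
    moreover have "(K + B + 1) * Pot s' = K * Pot s' + (B + 1) * Pot s'" "(K + B + 1) * Pot s = K * Pot s + (B + 1) * Pot s" by (simp_all add: algebra_simps)
    ultimately have "Suc c + (K + B + 1) * Pot s' \<le> (K + B + 1) * Pot s + (2 * B + 1)"
      using cb by linarith
    with exL J' le show ?thesis unfolding runs_def by blast
  next
    case RFail
    with q have J': "J s" and cb: "c \<le> B" by auto
    have exL: "exec (Suc f) (Loop P) s = Some (ROk s, Suc (2 * c))" using ex RFail by simp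
    have cc: "Suc (2 * c) + (K + B + 1) * Pot s \<le> (K + B + 1) * Pot s + (2 * B + 1)" using cb by simp
    have X: "\<exists>s'. ROk s = ROk s' \<and> J s' \<and> Pot s' \<le> Pot s \<and>
            Suc (2 * c) + (K + B + 1) * Pot s' \<le> (K + B + 1) * Pot s + (2 * B + 1)"
      using J' cc by blast
    show ?thesis unfolding runs_def
      by (rule exI, rule exI, rule exI, rule conjI[OF exL X])
  qed
qed



definition inv :: "hstate \<Rightarrow> bool" where
  "inv s \<longleftrightarrow> valid_rep s \<and>
     (\<forall>u\<in>V s. \<forall>v\<in>V s. rt s u \<longrightarrow> rt s v \<longrightarrow> u = v) \<and>
     (\<forall>e\<in>E s. emk s e = EDashed \<longrightarrow> nmk s (tgt s e) \<noteq> NGrey) \<and>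
     (\<forall>e1\<in>E s. \<forall>e2\<in>E s. emk s e1 = EDashed \<longrightarrow> emk s e2 = EDashed \<longrightarrow> tgt s e1 = tgt s e2
        \<longrightarrow> src s e1 \<noteq> tgt s e1 \<longrightarrow> src s e2 \<noteq> tgt s e2 \<longrightarrow> e1 = e2)"

definition noredE :: "hstate \<Rightarrow> bool" where "noredE s \<longleftrightarrow> (\<forall>e\<in>E s. emk s e \<noteq> ERed)"
definition onered :: "hstate \<Rightarrow> bool" where
  "onered s \<longleftrightarrow> (\<forall>e1\<in>E s. \<forall>e2\<in>E s. emk s e1 = ERed \<longrightarrow> emk s e2 = ERed \<longrightarrow> e1 = e2)"
definition noroot :: "hstate \<Rightarrow> bool" where "noroot s \<longleftrightarrow> (\<forall>v\<in>V s. \<not> rt s v)"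
definition noredroot :: "hstate \<Rightarrow> bool" where
  "noredroot s \<longleftrightarrow> (\<forall>v\<in>V s. rt s v \<longrightarrow> nmk s v \<noteq> NRed)"

lemma list_le1: "distinct xs \<Longrightarrow> (\<forall>x\<in>set xs. \<forall>y\<in>set xs. x = y) \<Longrightarrow> xs = [] \<or> (\<exists>x. xs = [x])"
proof (cases xs)
  case (Cons x ys)
  assume d: "distinct xs" and a: "\<forall>x\<in>set xs. \<forall>y\<in>set xs. x = y"
  show ?thesis
  proof (cases ys)
    case (Cons y zs)
    have "x \<in> set xs" "y \<in> set xs" "x \<noteq> y" using d \<open>xs = x # ys\<close> Cons by simp_all
    with a have False by blast
    then show ?thesis ..
  qed (simp add: \<open>xs = x # ys\<close>)
qed simp

lemma rlist_cases: "inv s \<Longrightarrow> rlist s = [] \<or> (\<exists>v. rlist s = [v] \<and> v \<in> V s \<and> rt s v)"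
proof -
  assume i: "inv s"
  then have d: "distinct (rlist s)" and st: "set (rlist s) = {v\<in>V s. rt s v}"
    and u: "\<forall>u\<in>V s. \<forall>v\<in>V s. rt s u \<longrightarrow> rt s v \<longrightarrow> u = v"
    unfolding inv_def valid_rep_def by auto
  have "\<forall>x\<in>set (rlist s). \<forall>y\<in>set (rlist s). x = y" using st u by auto
  from list_le1[OF d this] st show ?thesis by force
qed

lemma out_mem: "valid_rep s \<Longrightarrow> v \<in> V s \<Longrightarrow> e \<in> set (elist s v k OutE) \<Longrightarrow>
   e \<in> E s \<and> src s e = v \<and> tgt s e \<noteq> v \<and> emk s e = k"
  unfolding valid_rep_def by blast

lemma in_mem: "valid_rep s \<Longrightarrow> v \<in> V s \<Longrightarrow> e \<in> set (elist s v k InE) \<Longrightarrow>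
   e \<in> E s \<and> tgt s e = v \<and> src s e \<noteq> v \<and> emk s e = k"
  unfolding valid_rep_def by blast

lemma loop_mem: "valid_rep s \<Longrightarrow> v \<in> V s \<Longrightarrow> e \<in> set (elist s v k LoopE) \<Longrightarrow>
   e \<in> E s \<and> src s e = v \<and> tgt s e = v \<and> emk s e = k"
  unfolding valid_rep_def by blast

lemma nlist_mem: "valid_rep s \<Longrightarrow> x \<in> set (nlist s k) \<Longrightarrow> x \<in> V s \<and> nmk s x = k"
  unfolding valid_rep_def by blast

lemma red_out_cases:
  assumes "inv s" "onered s" "v \<in> V s"
  shows "elist s v ERed OutE = [] \<or> (\<exists>e. elist s v ERed OutE = [e] \<and> e \<in> E s \<and> src s e = v
           \<and> tgt s e \<noteq> v \<and> emk s e = ERed)"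
proof -
  have vr: "valid_rep s" using assms(1) unfolding inv_def by simp
  have d: "distinct (elist s v ERed OutE)" using vr assms(3) unfolding valid_rep_def by blast
  have "\<forall>x\<in>set (elist s v ERed OutE). \<forall>y\<in>set (elist s v ERed OutE). x = y"
    using out_mem[OF vr assms(3)] assms(2) unfolding onered_def by blast
  from list_le1[OF d this] show ?thesis
  proof
    assume "\<exists>x. elist s v ERed OutE = [x]"
    then obtain x where x: "elist s v ERed OutE = [x]" by blast
    then show ?thesis using out_mem[OF vr assms(3), of x ERed] by auto
  qed simp
qed

lemma dashed_in_cases:
  assumes "inv s" "w \<in> V s"
  shows "elist s w EDashed InE = [] \<or> (\<exists>e. elist s w EDashed InE = [e] \<and> e \<in> E s \<and> tgt s e = w
           \<and> src s e \<noteq> w \<and> emk s e = EDashed)"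
proof -
  have vr: "valid_rep s" using assms(1) unfolding inv_def by simp
  have d: "distinct (elist s w EDashed InE)" using vr assms(2) unfolding valid_rep_def by blast
  have "\<forall>x\<in>set (elist s w EDashed InE). \<forall>y\<in>set (elist s w EDashed InE). x = y"
    using in_mem[OF vr assms(2)] assms(1) unfolding inv_def by metis
  from list_le1[OF d this] show ?thesis
  proof
    assume "\<exists>x. elist s w EDashed InE = [x]"
    then obtain x where x: "elist s w EDashed InE = [x]" by blast
    then show ?thesis using in_mem[OF vr assms(2), of x EDashed] by auto
  qed simp
qed

lemma init_res: assumes "valid_rep s"
  shows "r_init s = (None, 1) \<or> (\<exists>x. r_init s = (Some (set_root x True (set_nmark x NRed s)), 3)
           \<and> x \<in> V s \<and> nmk s x = NGrey)"
proof (cases "nlist s NGrey")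
  case Nil
  then show ?thesis by (simp add: r_init_def)
next
  case (Cons x xs)
  then have "x \<in> V s \<and> nmk s x = NGrey" using nlist_mem[OF assms, of x NGrey] by simp
  then show ?thesis using Cons by (auto simp add: r_init_def)
qed

lemma root_with_res: assumes "inv s"
  shows "(\<exists>c. root_with k s = (None, c) \<and> c \<le> 3)
       \<or> (\<exists>v c. root_with k s = (Some v, c) \<and> c \<le> 3 \<and> v \<in> V s \<and> rt s v \<and> nmk s v = k)"
proof (cases "rlist s = []")
  case True
  then have "root_with k s = (None, 1)" by (simp add: root_with_def)
  then show ?thesis by simp
next
  case False
  then obtain v where rl: "rlist s = [v]" and v: "v \<in> V s" and rv: "rt s v"
    using rlist_cases[OF assms(1)] by blast
  show ?thesis
  proof (cases "nmk s v = k")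
    case True
    then have "root_with k s = (Some v, 2)" using rl by (simp add: root_with_def)
    then show ?thesis using v rv True
      by (intro disjI2 exI[of _ v] exI[of _ 2]) simp
  next
    case False
    then have "root_with k s = (None, 3)" using rl by (simp add: root_with_def)
    then show ?thesis by simp
  qed
qed

lemma next_edge_res: assumes "inv s"
  shows "(\<exists>c. r_next_edge s = (None, c) \<and> c \<le> 10)
       \<or> (\<exists>e c. r_next_edge s = (Some (set_emark e ERed s), c) \<and> c \<le> 10 \<and> e \<in> E s \<and> emk s e = EUnm)"
proof -
  have vr: "valid_rep s" using assms unfolding inv_def by simp
  show ?thesis
  proof (cases "rlist s = []")
    case True
    then show ?thesis by (simp add: r_next_edge_def red_root_out_def)
  next
    case False
    then obtain v where rl: "rlist s = [v]" and v: "v \<in> V s" using rlist_cases[OF assms] by blast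
    show ?thesis
    proof (cases "nmk s v = NRed")
      case False
      then show ?thesis using rl by (simp add: r_next_edge_def red_root_out_def)
    next
      case True
      show ?thesis
      proof (cases "elist s v EUnm OutE")
        case Nil
        then show ?thesis using rl True by (simp add: r_next_edge_def red_root_out_def)
      next
        case (Cons e es)
        then have "e \<in> E s \<and> src s e = v \<and> tgt s e \<noteq> v \<and> emk s e = EUnm"
          using out_mem[OF vr v, of e EUnm] by simp
        then show ?thesis using rl True Cons by (auto simp add: r_next_edge_def red_root_out_def)
      qed
    qed
  qed
qed

lemma move_res: assumes "inv s" "onered s"
  shows "(\<exists>c. r_move s = (None, c) \<and> c \<le> 10)
       \<or> (\<exists>v e c. r_move s = (Some (set_emark e EDashed (set_root (tgt s e) True
              (set_nmark (tgt s e) NRed (set_root v False s)))), c) \<and> c \<le> 10 \<and>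
            v \<in> V s \<and> rt s v \<and> e \<in> E s \<and> emk s e = ERed \<and> src s e = v \<and> tgt s e \<noteq> v
            \<and> nmk s (tgt s e) = NGrey)"
proof (cases "rlist s = []")
  case True
  then show ?thesis by (simp add: r_move_def red_root_out_def)
next
  case False
  then obtain v where rl: "rlist s = [v]" and v: "v \<in> V s" and rv: "rt s v"
    using rlist_cases[OF assms(1)] by blast
  show ?thesis
  proof (cases "nmk s v = NRed")
    case False
    then show ?thesis using rl by (simp add: r_move_def red_root_out_def)
  next
    case True
    from red_out_cases[OF assms v] show ?thesis
    proof
      assume "elist s v ERed OutE = []"
      then show ?thesis using rl True by (simp add: r_move_def red_root_out_def)
    next
      assume "\<exists>e. elist s v ERed OutE = [e] \<and> e \<in> E s \<and> src s e = v \<and> tgt s e \<noteq> v \<and> emk s e = ERed"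
      then obtain e where el: "elist s v ERed OutE = [e]" and e: "e \<in> E s" "src s e = v" "tgt s e \<noteq> v" "emk s e = ERed"
        by blast
      show ?thesis
      proof (cases "nmk s (tgt s e) = NGrey")
        case g: True
        have "r_move s = (Some (set_emark e EDashed (set_root (tgt s e) True
              (set_nmark (tgt s e) NRed (set_root v False s)))), 5)"
          using rl True el e g by (simp add: r_move_def red_root_out_def)
        then show ?thesis using e v rv g
          by (intro disjI2 exI[of _ v] exI[of _ e] exI[of _ 5]) simp
      next
        case g: False
        have "r_move s = (None, 6)"
          using rl True el e g by (simp add: r_move_def red_root_out_def)
        then show ?thesis by simp
      qed
    qed
  qed
qed

lemma ignore_res: assumes "inv s" "onered s"
  shows "(\<exists>c. r_ignore s = (None, c) \<and> c \<le> 10)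
       \<or> (\<exists>e c. r_ignore s = (Some (set_emark e EBlue s), c) \<and> c \<le> 10 \<and> e \<in> E s \<and> emk s e = ERed)"
proof (cases "rlist s = []")
  case True
  then show ?thesis by (simp add: r_ignore_def red_root_out_def)
next
  case False
  then obtain v where rl: "rlist s = [v]" and v: "v \<in> V s" and rv: "rt s v"
    using rlist_cases[OF assms(1)] by blast
  show ?thesis
  proof (cases "nmk s v = NRed")
    case False
    then show ?thesis using rl by (simp add: r_ignore_def red_root_out_def)
  next
    case True
    from red_out_cases[OF assms v] show ?thesis
    proof
      assume "elist s v ERed OutE = []"
      then show ?thesis using rl True by (simp add: r_ignore_def red_root_out_def)
    next
      assume "\<exists>e. elist s v ERed OutE = [e] \<and> e \<in> E s \<and> src s e = v \<and> tgt s e \<noteq> v \<and> emk s e = ERed"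
      then obtain e where el: "elist s v ERed OutE = [e]" and e: "e \<in> E s" "src s e = v" "tgt s e \<noteq> v" "emk s e = ERed"
        by blast
      show ?thesis
      proof (cases "nmk s (tgt s e) = NBlue")
        case g: True
        have "r_ignore s = (Some (set_emark e EBlue s), 5)"
          using rl True el e g by (simp add: r_ignore_def red_root_out_def)
        then show ?thesis using e
          by (intro disjI2 exI[of _ e] exI[of _ 5]) simp
      next
        case g: False
        have "r_ignore s = (None, 6)"
          using rl True el e g by (simp add: r_ignore_def red_root_out_def)
        then show ?thesis by simp
      qed
    qed
  qed
qed

lemma back_res: assumes "inv s"
  shows "(\<exists>c. r_back s = (None, c) \<and> c \<le> 10)
       \<or> (\<exists>v w e c. r_back s = (Some (set_emark e EBlue (set_root w False (set_nmark w NBlue (set_root v True s)))), c)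
            \<and> c \<le> 10 \<and> w \<in> V s \<and> rt s w \<and> nmk s w = NRed \<and> e \<in> E s \<and> emk s e = EDashed
            \<and> tgt s e = w \<and> src s e = v \<and> v \<noteq> w \<and> nmk s v = NRed)"
proof (cases "rlist s = []")
  case True
  then show ?thesis by (simp add: r_back_def)
next
  case False
  then obtain w where rl: "rlist s = [w]" and w: "w \<in> V s" and rw: "rt s w"
    using rlist_cases[OF assms(1)] by blast
  show ?thesis
  proof (cases "nmk s w = NRed")
    case False
    then show ?thesis using rl by (simp add: r_back_def)
  next
    case True
    from dashed_in_cases[OF assms w] show ?thesis
    proof
      assume "elist s w EDashed InE = []"
      then show ?thesis using rl True by (simp add: r_back_def)
    next
      assume "\<exists>e. elist s w EDashed InE = [e] \<and> e \<in> E s \<and> tgt s e = w \<and> src s e \<noteq> w \<and> emk s e = EDashed"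
      then obtain e where el: "elist s w EDashed InE = [e]" and e: "e \<in> E s" "tgt s e = w" "src s e \<noteq> w" "emk s e = EDashed"
        by blast
      show ?thesis
      proof (cases "nmk s (src s e) = NRed")
        case g: True
        have "r_back s = (Some (set_emark e EBlue (set_root w False (set_nmark w NBlue (set_root (src s e) True s)))), 5)"
          using rl True el e g by (simp add: r_back_def)
        then show ?thesis using e w rw True g
          by (intro disjI2 exI[of _ "src s e"] exI[of _ w] exI[of _ e] exI[of _ 5]) simp
      next
        case g: False
        have "r_back s = (None, 6)"
          using rl True el e g by (simp add: r_back_def)
        then show ?thesis by simp
      qed
    qed
  qed
qed

lemma loop_res: assumes "inv s"
  shows "(\<exists>c. r_loop s = (None, c) \<and> c \<le> 10)
       \<or> (\<exists>v c. r_loop s = (Some (set_nmark v NGreen s), c) \<and> c \<le> 10 \<and> v \<in> V s \<and> rt s v \<and> nmk s v = NRed)"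
proof (cases "rlist s = []")
  case True
  then show ?thesis by (simp add: r_loop_def)
next
  case False
  then obtain v where rl: "rlist s = [v]" and v: "v \<in> V s" and rv: "rt s v"
    using rlist_cases[OF assms(1)] by blast
  show ?thesis
  proof (cases "nmk s v = NRed")
    case False
    have "r_loop s = (None, 3)" using rl False by (simp add: r_loop_def)
    then show ?thesis by simp
  next
    case True
    show ?thesis
    proof (cases "elist s v EUnm LoopE")
      case Nil
      have "r_loop s = (None, 4)" using rl True Nil by (simp add: r_loop_def)
      then show ?thesis by simp
    next
      case (Cons x xs)
      have "r_loop s = (Some (set_nmark v NGreen s), 5)" using rl True Cons by (simp add: r_loop_def)
      then show ?thesis using v rv True
        by (intro disjI2 exI[of _ v] exI[of _ 5]) simp
    qed
  qed
qed



definition cntE :: "emark \<Rightarrow> hstate \<Rightarrow> nat" where "cntE k s = card {e\<in>E s. emk s e = k}"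
definition cntV :: "nmark \<Rightarrow> hstate \<Rightarrow> nat" where "cntV k s = card {v\<in>V s. nmk s v = k}"
definition Pot :: "hstate \<Rightarrow> nat" where "Pot s = 3 * cntE EUnm s + 3 * cntV NGrey s + cntV NRed s"

definition Dst :: "hstate \<Rightarrow> bool" where "Dst s \<longleftrightarrow> inv s \<and> noredE s"
definition Mst :: "hstate \<Rightarrow> bool" where "Mst s \<longleftrightarrow> inv s \<and> noroot s \<and> noredE s"
definition DJ :: "hstate \<Rightarrow> bool" where "DJ s \<longleftrightarrow> inv s \<and> (noredE s \<or> noredroot s)"

lemma cnt_upd:
  assumes "finite A" "x \<in> A"
  shows "card {y\<in>A. (f(x:=k')) y = k} = (if k' = k then (if f x = k then card {y\<in>A. f y = k}
           else Suc (card {y\<in>A. f y = k})) else (if f x = k then card {y\<in>A. f y = k} - 1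
           else card {y\<in>A. f y = k}))"
proof -
  have fin: "finite {y\<in>A. f y = k}" using assms(1) by simp
  show ?thesis
  proof (cases "k' = k")
    case True
    then have "{y\<in>A. (f(x:=k')) y = k} = insert x {y\<in>A. f y = k}" using assms(2) by auto
    then show ?thesis using True fin assms(2) by (simp add: card_insert_if)
  next
    case False
    then have "{y\<in>A. (f(x:=k')) y = k} = {y\<in>A. f y = k} - {x}" using assms(2) by auto
    then show ?thesis using False fin assms(2) by (simp add: card_Diff_singleton_if)
  qed
qed

lemma cnt_pos: "finite A \<Longrightarrow> x \<in> A \<Longrightarrow> f x = k \<Longrightarrow> 0 < card {y\<in>A. f y = k}"
  by (subst card_gt_0_iff) auto

lemma cnt_simps[simp]:
  "cntV k1 (set_root v b s) = cntV k1 s" "cntE k2 (set_root v b s) = cntE k2 s"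
  "cntE k2 (set_nmark v k1 s) = cntE k2 s" "cntV k1 (set_emark e k2 s) = cntV k1 s"
  by (simp_all add: cntV_def cntE_def)

lemma valid_fin: "valid_rep s \<Longrightarrow> finite (V s) \<and> finite (E s)"
  unfolding valid_rep_def by blast

lemma cntV_set_nmark: "valid_rep s \<Longrightarrow> v \<in> V s \<Longrightarrow> cntV k (set_nmark v k' s) =
   (if k' = k then (if nmk s v = k then cntV k s else Suc (cntV k s)) else (if nmk s v = k then cntV k s - 1
           else cntV k s))"
  unfolding cntV_def using valid_fin by (simp only: set_nmark_simps cnt_upd)

lemma cntE_set_emark: "valid_rep s \<Longrightarrow> e \<in> E s \<Longrightarrow> cntE k (set_emark e k' s) =
   (if k' = k then (if emk s e = k then cntE k s else Suc (cntE k s)) else (if emk s e = k then cntE k s - 1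
           else cntE k s))"
  unfolding cntE_def using valid_fin by (simp only: set_emark_simps cnt_upd)

lemma cntV_pos: "valid_rep s \<Longrightarrow> v \<in> V s \<Longrightarrow> nmk s v = k \<Longrightarrow> 0 < cntV k s"
  unfolding cntV_def using valid_fin by (intro cnt_pos) auto

lemma cntE_pos: "valid_rep s \<Longrightarrow> e \<in> E s \<Longrightarrow> emk s e = k \<Longrightarrow> 0 < cntE k s"
  unfolding cntE_def using valid_fin by (intro cnt_pos) auto

lemma inv_valid: "inv s \<Longrightarrow> valid_rep s" unfolding inv_def by simp

lemma valid_src_tgt: assumes "valid_rep s" "e \<in> E s" shows "src s e \<in> V s \<and> tgt s e \<in> V s"
proof -
  have "\<forall>e\<in>E s. src s e \<in> V s \<and> tgt s e \<in> V s" using assms(1) unfolding valid_rep_def by (elim conjE)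
  then show ?thesis using assms(2) by blast
qed

definition roots1 :: "hstate \<Rightarrow> bool" where
  "roots1 s \<longleftrightarrow> (\<forall>u\<in>V s. \<forall>v\<in>V s. rt s u \<longrightarrow> rt s v \<longrightarrow> u = v)"
definition dgrey :: "hstate \<Rightarrow> bool" where
  "dgrey s \<longleftrightarrow> (\<forall>e\<in>E s. emk s e = EDashed \<longrightarrow> nmk s (tgt s e) \<noteq> NGrey)"
definition duniq :: "hstate \<Rightarrow> bool" where
  "duniq s \<longleftrightarrow> (\<forall>e1\<in>E s. \<forall>e2\<in>E s. emk s e1 = EDashed \<longrightarrow> emk s e2 = EDashed \<longrightarrow> tgt s e1 = tgt s e2
        \<longrightarrow> src s e1 \<noteq> tgt s e1 \<longrightarrow> src s e2 \<noteq> tgt s e2 \<longrightarrow> e1 = e2)"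

lemma inv_iff: "inv s \<longleftrightarrow> valid_rep s \<and> roots1 s \<and> dgrey s \<and> duniq s"
  unfolding inv_def roots1_def dgrey_def duniq_def by (rule refl)

lemma roots1_simps[simp]: "roots1 (set_emark e k s) = roots1 s" "roots1 (set_nmark v k' s) = roots1 s"
  unfolding roots1_def by simp_all
lemma dgrey_root[simp]: "dgrey (set_root v b s) = dgrey s" unfolding dgrey_def by simp
lemma duniq_root[simp]: "duniq (set_root v b s) = duniq s" unfolding duniq_def by simp
lemma duniq_nmark[simp]: "duniq (set_nmark v k s) = duniq s" unfolding duniq_def by simp

lemma roots1_F: "roots1 s \<Longrightarrow> roots1 (set_root v False s)"
  unfolding roots1_def set_root_simps fun_upd_apply by metis
lemma roots1_T: "(\<forall>u\<in>V s. rt s u \<longrightarrow> u = v) \<Longrightarrow> roots1 (set_root v True s)"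
  unfolding roots1_def set_root_simps fun_upd_apply by metis
lemma dgrey_nmark: "dgrey s \<Longrightarrow> k \<noteq> NGrey \<Longrightarrow> dgrey (set_nmark v k s)"
  unfolding dgrey_def by simp
lemma dgrey_emark: "dgrey s \<Longrightarrow> k \<noteq> EDashed \<Longrightarrow> dgrey (set_emark e k s)"
  unfolding dgrey_def by simp
lemma duniq_emark: "duniq s \<Longrightarrow> k \<noteq> EDashed \<Longrightarrow> duniq (set_emark e k s)"
  unfolding duniq_def by simp
lemma dgrey_emarkD: "dgrey s \<Longrightarrow> nmk s (tgt s e) \<noteq> NGrey \<Longrightarrow> dgrey (set_emark e EDashed s)"
  unfolding dgrey_def by simp
lemma duniq_emarkD: "duniq s \<Longrightarrow> (\<forall>e2\<in>E s. emk s e2 = EDashed \<longrightarrow> tgt s e2 \<noteq> tgt s e) \<Longrightarrow>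
   duniq (set_emark e EDashed s)"
  unfolding duniq_def by (simp, metis)

lemma inv_emark: "inv s \<Longrightarrow> e \<in> E s \<Longrightarrow> k \<noteq> EDashed \<Longrightarrow> inv (set_emark e k s)"
  unfolding inv_iff by (simp add: valid_set_emark dgrey_emark duniq_emark)
lemma inv_nmark: "inv s \<Longrightarrow> v \<in> V s \<Longrightarrow> k \<noteq> NGrey \<Longrightarrow> inv (set_nmark v k s)"
  unfolding inv_iff by (simp add: valid_set_nmark dgrey_nmark)
lemma inv_rootF: "inv s \<Longrightarrow> v \<in> V s \<Longrightarrow> inv (set_root v False s)"
  unfolding inv_iff by (simp add: valid_set_root roots1_F)
lemma inv_rootT: "inv s \<Longrightarrow> v \<in> V s \<Longrightarrow> (\<forall>u\<in>V s. rt s u \<longrightarrow> u = v) \<Longrightarrow> inv (set_root v True s)"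
  unfolding inv_iff by (simp add: valid_set_root roots1_T)

lemma tr_next:
  assumes "Dst s" "e \<in> E s" "emk s e = EUnm"
  shows "inv (set_emark e ERed s) \<and> onered (set_emark e ERed s) \<and> Pot (set_emark e ERed s) < Pot s"
proof -
  have i: "inv s" and nr: "noredE s" using assms(1) unfolding Dst_def by auto
  have vr: "valid_rep s" using i by (rule inv_valid)
  have "inv (set_emark e ERed s)"
    using i assms(2) by (simp add: inv_emark)
  moreover have "onered (set_emark e ERed s)" using nr unfolding onered_def noredE_def by auto
  moreover have "Pot (set_emark e ERed s) < Pot s"
    using cntE_set_emark[OF vr assms(2)] cntE_pos[OF vr assms(2,3)] assms(3) unfolding Pot_def by simp
  ultimately show ?thesis by blast
qed

lemma tr_move:
  assumes i: "inv s" and o: "onered s" and v: "v \<in> V s" "rt s v" and e: "e \<in> E s" "emk s e = ERed"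
    "tgt s e \<noteq> v" "nmk s (tgt s e) = NGrey"
  shows "Dst (set_emark e EDashed (set_root (tgt s e) True (set_nmark (tgt s e) NRed (set_root v False s))))
    \<and> Pot (set_emark e EDashed (set_root (tgt s e) True (set_nmark (tgt s e) NRed (set_root v False s)))) < Pot s"
proof -
  define t where "t = tgt s e"
  define sa where "sa = set_root v False s"
  define sb where "sb = set_nmark t NRed sa"
  define sc where "sc = set_root t True sb"
  define sd where "sd = set_emark e EDashed sc"
  have vr: "valid_rep s" using i by (rule inv_valid)
  have t: "t \<in> V s" using valid_src_tgt[OF vr e(1)] unfolding t_def by simp
  have ia: "inv sa" unfolding sa_def using i v by (simp add: inv_rootF)
  have ib: "inv sb" unfolding sb_def using ia t e(4) unfolding t_def sa_def by (simp add: inv_nmark)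
  have r1: "roots1 s" using i by (simp only: inv_iff)
  have nor: "\<forall>u\<in>V sb. rt sb u \<longrightarrow> u = t"
  proof
    fix u assume u: "u \<in> V sb"
    show "rt sb u \<longrightarrow> u = t"
    proof
      assume "rt sb u"
      then have "rt s u" "u \<noteq> v" unfolding sb_def sa_def by (auto split: if_splits)
      moreover have uV: "u \<in> V s" using u unfolding sb_def sa_def by simp
      ultimately have "u = v" using r1 v unfolding roots1_def by blast
      with \<open>u \<noteq> v\<close> show "u = t" by simp
    qed
  qed
  have ic: "inv sc" unfolding sc_def
  proof (rule inv_rootT[OF ib])
    show "t \<in> V sb" using t unfolding sb_def sa_def by simp
  qed (rule nor)
  have vc: "valid_rep sc" using ic by (rule inv_valid)
  have dg: "dgrey s" using i by (simp only: inv_iff)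
  have "\<forall>e2\<in>E sc. emk sc e2 = EDashed \<longrightarrow> tgt sc e2 \<noteq> tgt sc e"
  proof (intro ballI impI)
    fix e2 assume "e2 \<in> E sc" "emk sc e2 = EDashed"
    then have "e2 \<in> E s" "emk s e2 = EDashed" unfolding sc_def sb_def sa_def by simp_all
    with dg have "nmk s (tgt s e2) \<noteq> NGrey" unfolding dgrey_def by blast
    with e(4) show "tgt sc e2 \<noteq> tgt sc e" unfolding sc_def sb_def sa_def by auto
  qed
  moreover have "nmk sc (tgt sc e) \<noteq> NGrey" unfolding sc_def sb_def sa_def t_def by simp
  ultimately have id: "inv sd" unfolding sd_def using ic e(1) unfolding inv_iff sc_def sb_def sa_def
    by (simp add: valid_set_emark dgrey_emarkD duniq_emarkD)
  have nr: "noredE sd" using o e unfolding sd_def sc_def sb_def sa_def onered_def noredE_def by auto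
  have vb: "valid_rep sb" using ib by (rule inv_valid)
  have "Pot sd < Pot s"
    unfolding sd_def sc_def Pot_def
    using cntE_set_emark[OF vc, of e] e(1,2) cntV_set_nmark[OF inv_valid[OF ia], of t] t e(4)
      cntV_pos[OF vr t, of NGrey] unfolding sc_def sb_def sa_def t_def by simp
  then show ?thesis using id nr unfolding Dst_def sd_def sc_def sb_def sa_def t_def by simp
qed

lemma roots1D: "roots1 s \<Longrightarrow> u \<in> V s \<Longrightarrow> v \<in> V s \<Longrightarrow> rt s u \<Longrightarrow> rt s v \<Longrightarrow> u = v"
  unfolding roots1_def by blast

lemma inv_roots1: "inv s \<Longrightarrow> roots1 s" by (simp only: inv_iff)
lemma inv_dgrey: "inv s \<Longrightarrow> dgrey s" by (simp only: inv_iff)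
lemma inv_duniq: "inv s \<Longrightarrow> duniq s" by (simp only: inv_iff)

lemma tr_ignore:
  assumes i: "inv s" and o: "onered s" and e: "e \<in> E s" "emk s e = ERed"
  shows "Dst (set_emark e EBlue s) \<and> Pot (set_emark e EBlue s) \<le> Pot s"
proof -
  have vr: "valid_rep s" using i by (rule inv_valid)
  have "inv (set_emark e EBlue s)" using i e(1) by (simp add: inv_emark)
  moreover have "noredE (set_emark e EBlue s)" using o e unfolding onered_def noredE_def by auto
  moreover have "Pot (set_emark e EBlue s) \<le> Pot s"
    unfolding Pot_def using cntE_set_emark[OF vr e(1), of EUnm EBlue] e(2) by simp
  ultimately show ?thesis unfolding Dst_def by blast
qed

lemma tr_setflag:
  assumes i: "inv s" and v: "v \<in> V s" "rt s v" "nmk s v = NRed"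
  shows "DJ (set_nmark v NGreen s) \<and> Pot (set_nmark v NGreen s) \<le> Pot s"
proof -
  have vr: "valid_rep s" using i by (rule inv_valid)
  have "inv (set_nmark v NGreen s)" using i v(1) by (simp add: inv_nmark)
  moreover have "noredroot (set_nmark v NGreen s)" unfolding noredroot_def
  proof (intro ballI impI)
    fix u assume "u \<in> V (set_nmark v NGreen s)" "rt (set_nmark v NGreen s) u"
    then have "u \<in> V s" "rt s u" by simp_all
    then have "u = v" using roots1D[OF inv_roots1[OF i] _ v(1) _ v(2)] by blast
    then show "nmk (set_nmark v NGreen s) u \<noteq> NRed" by simp
  qed
  moreover have "Pot (set_nmark v NGreen s) \<le> Pot s"
    unfolding Pot_def using cntV_set_nmark[OF vr v(1)] v(3) by simp
  ultimately show ?thesis unfolding DJ_def by blast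
qed

lemma tr_loop:
  assumes d: "Dst s" and v: "v \<in> V s" "rt s v" "nmk s v = NRed"
  shows "Dst (set_nmark v NGreen s) \<and> Pot (set_nmark v NGreen s) \<le> Pot s"
proof -
  have i: "inv s" and nr: "noredE s" using d unfolding Dst_def by auto
  have vr: "valid_rep s" using i by (rule inv_valid)
  have "inv (set_nmark v NGreen s)" using i v(1) by (simp add: inv_nmark)
  moreover have "noredE (set_nmark v NGreen s)" using nr unfolding noredE_def by simp
  moreover have "Pot (set_nmark v NGreen s) \<le> Pot s"
    unfolding Pot_def using cntV_set_nmark[OF vr v(1)] v(3) by simp
  ultimately show ?thesis unfolding Dst_def by blast
qed

lemma tr_back:
  assumes d: "Dst s" and w: "w \<in> V s" "rt s w" "nmk s w = NRed" and e: "e \<in> E s" "emk s e = EDashed"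
    "tgt s e = w" "src s e = v" "v \<noteq> w"
  shows "Dst (set_emark e EBlue (set_root w False (set_nmark w NBlue (set_root v True s))))
    \<and> Pot (set_emark e EBlue (set_root w False (set_nmark w NBlue (set_root v True s)))) < Pot s"
proof -
  have i: "inv s" and nr: "noredE s" using d unfolding Dst_def by auto
  have vr: "valid_rep s" using i by (rule inv_valid)
  have vV: "v \<in> V s" using valid_src_tgt[OF vr e(1)] e(4) by simp
  define sa where "sa = set_root v True s"
  define sb where "sb = set_nmark w NBlue sa"
  define sc where "sc = set_root w False sb"
  define sd where "sd = set_emark e EBlue sc"
  have va: "valid_rep sa" unfolding sa_def using vr vV by (rule valid_set_root)
  have wa: "w \<in> V sa" unfolding sa_def using w(1) by simp
  have vb: "valid_rep sb" unfolding sb_def using va w(1) unfolding sa_def by (simp add: valid_set_nmark)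
  have vc: "valid_rep sc" unfolding sc_def using vb w(1) unfolding sb_def sa_def by (simp add: valid_set_root)
  have vd: "valid_rep sd" unfolding sd_def using vc e(1) unfolding sc_def sb_def sa_def by (simp add: valid_set_emark)
  have r1: "roots1 sc" unfolding roots1_def
  proof (intro ballI impI)
    fix u1 u2 assume u: "u1 \<in> V sc" "u2 \<in> V sc" "rt sc u1" "rt sc u2"
    have "\<And>u. u \<in> V sc \<Longrightarrow> rt sc u \<Longrightarrow> u = v"
    proof -
      fix u assume "u \<in> V sc" "rt sc u"
      then have uV: "u \<in> V s" and "u \<noteq> w" and "u = v \<or> rt s u" unfolding sc_def sb_def sa_def
        by (auto split: if_splits)
      then show "u = v" using roots1D[OF inv_roots1[OF i] uV w(1) _ w(2)] by blast
    qed
    with u show "u1 = u2" by metis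
  qed
  have dg: "dgrey sc" unfolding sc_def sb_def sa_def using inv_dgrey[OF i] by (simp add: dgrey_nmark)
  have du: "duniq sc" unfolding sc_def sb_def sa_def using inv_duniq[OF i] by simp
  have "inv sd" unfolding inv_iff sd_def
    using vd r1 dg du unfolding sd_def by (simp add: dgrey_emark duniq_emark)
  moreover have "noredE sd" using nr unfolding sd_def sc_def sb_def sa_def noredE_def by auto
  moreover have "Pot sd < Pot s"
    unfolding sd_def sc_def Pot_def
    using cntE_set_emark[OF vc, of e EUnm EBlue] e(1,2) cntV_set_nmark[OF va wa] w(3)
      cntV_pos[OF vr w(1,3)] unfolding sc_def sb_def sa_def by simp
  ultimately show ?thesis unfolding Dst_def sd_def sc_def sb_def sa_def by blast
qed

lemma tr_init:
  assumes m: "Mst s" and x: "x \<in> V s" "nmk s x = NGrey"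
  shows "Dst (set_root x True (set_nmark x NRed s)) \<and> Pot (set_root x True (set_nmark x NRed s)) < Pot s"
proof -
  have i: "inv s" and nr: "noredE s" and no: "noroot s" using m unfolding Mst_def by auto
  have vr: "valid_rep s" using i by (rule inv_valid)
  have ia: "inv (set_nmark x NRed s)" using i x(1) by (simp add: inv_nmark)
  have "\<forall>u\<in>V (set_nmark x NRed s). rt (set_nmark x NRed s) u \<longrightarrow> u = x" using no unfolding noroot_def by simp
  then have "inv (set_root x True (set_nmark x NRed s))"
  proof (intro inv_rootT[OF ia])
    show "x \<in> V (set_nmark x NRed s)" using x(1) by simp
  qed
  moreover have "noredE (set_root x True (set_nmark x NRed s))" using nr unfolding noredE_def by simp
  moreover have "Pot (set_root x True (set_nmark x NRed s)) < Pot s"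
    unfolding Pot_def using cntV_set_nmark[OF vr x(1)] x(2) cntV_pos[OF vr x(1,2)] by simp
  ultimately show ?thesis unfolding Dst_def by blast
qed

lemma tr_unroot:
  assumes dj: "DJ s" and v: "v \<in> V s" "rt s v" "nmk s v = NRed"
  shows "Mst (set_root v False (set_nmark v NBlue s)) \<and> Pot (set_root v False (set_nmark v NBlue s)) < Pot s"
proof -
  have i: "inv s" and nr: "noredE s \<or> noredroot s" using dj unfolding DJ_def by auto
  have vr: "valid_rep s" using i by (rule inv_valid)
  have nr2: "noredE s" using nr v unfolding noredroot_def by blast
  have ia: "inv (set_nmark v NBlue s)" using i v(1) by (simp add: inv_nmark)
  have "inv (set_root v False (set_nmark v NBlue s))" using inv_rootF[OF ia] v(1) by simp
  moreover have "noroot (set_root v False (set_nmark v NBlue s))" unfolding noroot_def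
  proof (intro ballI)
    fix u assume "u \<in> V (set_root v False (set_nmark v NBlue s))"
    then have uV: "u \<in> V s" by simp
    show "\<not> rt (set_root v False (set_nmark v NBlue s)) u"
    proof (cases "u = v")
      case False
      then have "\<not> rt s u" using roots1D[OF inv_roots1[OF i] uV v(1) _ v(2)] by blast
      then show ?thesis by simp
    qed simp
  qed
  moreover have "noredE (set_root v False (set_nmark v NBlue s))" using nr2 unfolding noredE_def by simp
  moreover have "Pot (set_root v False (set_nmark v NBlue s)) < Pot s"
    unfolding Pot_def using cntV_set_nmark[OF vr v(1)] v(3) cntV_pos[OF vr v(1,3)] by simp
  ultimately show ?thesis unfolding Mst_def by blast
qed



lemma apply_rs1: "r s = (x, c) \<Longrightarrow> apply_rs [r] s = (x, c)"
  by (cases x) simp_all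

lemma call_next:
  assumes d: "Dst s"
  shows "runs s (Call [r_next_edge]) (\<lambda>r c. c \<le> 11 \<and> (case r of ROk s1 \<Rightarrow> inv s1 \<and> onered s1 \<and> Pot s1 < Pot s
            | RFail \<Rightarrow> True | RBrk _ \<Rightarrow> False))"
proof -
  have i: "inv s" using d unfolding Dst_def by simp
  from next_edge_res[OF i] show ?thesis
  proof
    assume "\<exists>c. r_next_edge s = (None, c) \<and> c \<le> 10"
    then obtain c where "r_next_edge s = (None, c)" "c \<le> 10" by blast
    then show ?thesis by (intro runs_Call) (simp add: apply_rs1)
  next
    assume "\<exists>e c. r_next_edge s = (Some (set_emark e ERed s), c) \<and> c \<le> 10 \<and> e \<in> E s \<and> emk s e = EUnm"
    then obtain e c where h: "r_next_edge s = (Some (set_emark e ERed s), c)" "c \<le> 10" "e \<in> E s" "emk s e = EUnm"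
      by blast
    have t: "inv (set_emark e ERed s) \<and> onered (set_emark e ERed s) \<and> Pot (set_emark e ERed s) < Pot s"
      by (rule tr_next[OF d h(3,4)])
    show ?thesis using h(1,2) t by (intro runs_Call) (simp add: apply_rs1)
  qed
qed

lemma call_mi:
  assumes i: "inv s" and o: "onered s"
  shows "runs s (Call [r_move, r_ignore]) (\<lambda>r c. c \<le> 21 \<and> (case r of ROk s2 \<Rightarrow> Dst s2 \<and> Pot s2 \<le> Pot s
            | RFail \<Rightarrow> True | RBrk _ \<Rightarrow> False))"
proof -
  from move_res[OF i o] show ?thesis
  proof
    assume "\<exists>c. r_move s = (None, c) \<and> c \<le> 10"
    then obtain c1 where m: "r_move s = (None, c1)" "c1 \<le> 10" by blast
    from ignore_res[OF i o] show ?thesis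
    proof
      assume "\<exists>c. r_ignore s = (None, c) \<and> c \<le> 10"
      then obtain c2 where "r_ignore s = (None, c2)" "c2 \<le> 10" by blast
      then show ?thesis using m by (intro runs_Call) simp
    next
      assume "\<exists>e c. r_ignore s = (Some (set_emark e EBlue s), c) \<and> c \<le> 10 \<and> e \<in> E s \<and> emk s e = ERed"
      then obtain e c2 where h: "r_ignore s = (Some (set_emark e EBlue s), c2)" "c2 \<le> 10" "e \<in> E s" "emk s e = ERed"
        by blast
      have t: "Dst (set_emark e EBlue s) \<and> Pot (set_emark e EBlue s) \<le> Pot s" by (rule tr_ignore[OF i o h(3,4)])
      show ?thesis using h(1,2) m t by (intro runs_Call) simp
    qed
  next
    assume "\<exists>v e c. r_move s = (Some (set_emark e EDashed (set_root (tgt s e) True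
              (set_nmark (tgt s e) NRed (set_root v False s)))), c) \<and> c \<le> 10 \<and>
            v \<in> V s \<and> rt s v \<and> e \<in> E s \<and> emk s e = ERed \<and> src s e = v \<and> tgt s e \<noteq> v
            \<and> nmk s (tgt s e) = NGrey"
    then obtain v e c where h: "r_move s = (Some (set_emark e EDashed (set_root (tgt s e) True
              (set_nmark (tgt s e) NRed (set_root v False s)))), c)" "c \<le> 10"
            "v \<in> V s" "rt s v" "e \<in> E s" "emk s e = ERed" "tgt s e \<noteq> v" "nmk s (tgt s e) = NGrey"
      by blast
    have t: "Dst (set_emark e EDashed (set_root (tgt s e) True (set_nmark (tgt s e) NRed (set_root v False s))))
    \<and> Pot (set_emark e EDashed (set_root (tgt s e) True (set_nmark (tgt s e) NRed (set_root v False s)))) < Pot s"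
      by (rule tr_move[OF i o h(3-8)])
    show ?thesis using h(1,2) t by (intro runs_Call) simp
  qed
qed

lemma call_setflag:
  assumes i: "inv s"
  shows "runs s (Call [r_set_flag]) (\<lambda>r c. c \<le> 11 \<and> (case r of ROk s2 \<Rightarrow> DJ s2 \<and> Pot s2 \<le> Pot s
            | RFail \<Rightarrow> True | RBrk _ \<Rightarrow> False))"
proof -
  from root_with_res[OF i, of NRed] show ?thesis
  proof
    assume "\<exists>c. root_with NRed s = (None, c) \<and> c \<le> 3"
    then obtain c where "root_with NRed s = (None, c)" "c \<le> 3" by blast
    then show ?thesis by (intro runs_Call) (simp add: r_set_flag_def)
  next
    assume "\<exists>v c. root_with NRed s = (Some v, c) \<and> c \<le> 3 \<and> v \<in> V s \<and> rt s v \<and> nmk s v = NRed"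
    then obtain v c where h: "root_with NRed s = (Some v, c)" "c \<le> 3" "v \<in> V s" "rt s v" "nmk s v = NRed" by blast
    have t: "DJ (set_nmark v NGreen s) \<and> Pot (set_nmark v NGreen s) \<le> Pot s" by (rule tr_setflag[OF i h(3-5)])
    show ?thesis using h(1,2) t by (intro runs_Call) (simp add: r_set_flag_def)
  qed
qed

lemma call_unroot:
  assumes dj: "DJ s"
  shows "runs s (Call [r_unroot]) (\<lambda>r c. c \<le> 11 \<and> (case r of ROk s2 \<Rightarrow> Mst s2 \<and> Pot s2 < Pot s
            | RFail \<Rightarrow> True | RBrk _ \<Rightarrow> False))"
proof -
  have i: "inv s" using dj unfolding DJ_def by simp
  from root_with_res[OF i, of NRed] show ?thesis
  proof
    assume "\<exists>c. root_with NRed s = (None, c) \<and> c \<le> 3"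
    then obtain c where "root_with NRed s = (None, c)" "c \<le> 3" by blast
    then show ?thesis by (intro runs_Call) (simp add: r_unroot_def)
  next
    assume "\<exists>v c. root_with NRed s = (Some v, c) \<and> c \<le> 3 \<and> v \<in> V s \<and> rt s v \<and> nmk s v = NRed"
    then obtain v c where h: "root_with NRed s = (Some v, c)" "c \<le> 3" "v \<in> V s" "rt s v" "nmk s v = NRed" by blast
    have t: "Mst (set_root v False (set_nmark v NBlue s)) \<and> Pot (set_root v False (set_nmark v NBlue s)) < Pot s"
      by (rule tr_unroot[OF dj h(3-5)])
    show ?thesis using h(1,2) t by (intro runs_Call) (simp add: r_unroot_def)
  qed
qed

lemma call_flag:
  assumes i: "inv s"
  shows "runs s (Call [r_flag]) (\<lambda>r c. c \<le> 11)"
proof -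
  from root_with_res[OF i, of NGreen] show ?thesis
  proof
    assume "\<exists>c. root_with NGreen s = (None, c) \<and> c \<le> 3"
    then obtain c where "root_with NGreen s = (None, c)" "c \<le> 3" by blast
    then show ?thesis by (intro runs_Call) (simp add: r_flag_def)
  next
    assume "\<exists>v c. root_with NGreen s = (Some v, c) \<and> c \<le> 3 \<and> v \<in> V s \<and> rt s v \<and> nmk s v = NGreen"
    then obtain v c where h: "root_with NGreen s = (Some v, c)" "c \<le> 3" by blast
    show ?thesis using h(1,2) by (intro runs_Call) (simp add: r_flag_def)
  qed
qed

lemma call_init:
  assumes m: "Mst s"
  shows "runs s (Call [r_init]) (\<lambda>r c. c \<le> 11 \<and> (case r of ROk s2 \<Rightarrow> Dst s2 \<and> Pot s2 < Pot s
            | RFail \<Rightarrow> True | RBrk _ \<Rightarrow> False))"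
proof -
  have vr: "valid_rep s" using m unfolding Mst_def by (simp add: inv_valid)
  from init_res[OF vr] show ?thesis
  proof
    assume "r_init s = (None, 1)"
    then show ?thesis by (intro runs_Call) simp
  next
    assume "\<exists>x. r_init s = (Some (set_root x True (set_nmark x NRed s)), 3) \<and> x \<in> V s \<and> nmk s x = NGrey"
    then obtain x where h: "r_init s = (Some (set_root x True (set_nmark x NRed s)), 3)" "x \<in> V s" "nmk s x = NGrey"
      by blast
    have t: "Dst (set_root x True (set_nmark x NRed s)) \<and> Pot (set_root x True (set_nmark x NRed s)) < Pot s"
      by (rule tr_init[OF m h(2,3)])
    show ?thesis using h(1) t by (intro runs_Call) simp
  qed
qed

lemma call_loop:
  assumes d: "Dst s"
  shows "runs s (Call [r_loop]) (\<lambda>r c. c \<le> 11 \<and> (case r of ROk s2 \<Rightarrow> Dst s2 \<and> Pot s2 \<le> Pot s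
            | RFail \<Rightarrow> True | RBrk _ \<Rightarrow> False))"
proof -
  have i: "inv s" using d unfolding Dst_def by simp
  from loop_res[OF i] show ?thesis
  proof
    assume "\<exists>c. r_loop s = (None, c) \<and> c \<le> 10"
    then obtain c where "r_loop s = (None, c)" "c \<le> 10" by blast
    then show ?thesis by (intro runs_Call) simp
  next
    assume "\<exists>v c. r_loop s = (Some (set_nmark v NGreen s), c) \<and> c \<le> 10 \<and> v \<in> V s \<and> rt s v \<and> nmk s v = NRed"
    then obtain v c where h: "r_loop s = (Some (set_nmark v NGreen s), c)" "c \<le> 10" "v \<in> V s" "rt s v" "nmk s v = NRed"
      by blast
    have t: "Dst (set_nmark v NGreen s) \<and> Pot (set_nmark v NGreen s) \<le> Pot s" by (rule tr_loop[OF d h(3-5)])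
    show ?thesis using h(1,2) t by (intro runs_Call) simp
  qed
qed

lemma call_back:
  assumes d: "Dst s"
  shows "runs s (Call [r_back]) (\<lambda>r c. c \<le> 11 \<and> (case r of ROk s2 \<Rightarrow> Dst s2 \<and> Pot s2 < Pot s
            | RFail \<Rightarrow> True | RBrk _ \<Rightarrow> False))"
proof -
  have i: "inv s" using d unfolding Dst_def by simp
  from back_res[OF i] show ?thesis
  proof
    assume "\<exists>c. r_back s = (None, c) \<and> c \<le> 10"
    then obtain c where "r_back s = (None, c)" "c \<le> 10" by blast
    then show ?thesis by (intro runs_Call) simp
  next
    assume "\<exists>v w e c. r_back s = (Some (set_emark e EBlue (set_root w False (set_nmark w NBlue (set_root v True s)))), c)
            \<and> c \<le> 10 \<and> w \<in> V s \<and> rt s w \<and> nmk s w = NRed \<and> e \<in> E s \<and> emk s e = EDashed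
            \<and> tgt s e = w \<and> src s e = v \<and> v \<noteq> w \<and> nmk s v = NRed"
    then obtain v w e c where h: "r_back s = (Some (set_emark e EBlue (set_root w False (set_nmark w NBlue (set_root v True s)))), c)"
       "c \<le> 10" "w \<in> V s" "rt s w" "nmk s w = NRed" "e \<in> E s" "emk s e = EDashed"
            "tgt s e = w" "src s e = v" "v \<noteq> w"
      by blast
    have t: "Dst (set_emark e EBlue (set_root w False (set_nmark w NBlue (set_root v True s))))
    \<and> Pot (set_emark e EBlue (set_root w False (set_nmark w NBlue (set_root v True s)))) < Pot s"
      by (rule tr_back[OF d h(3-10)])
    show ?thesis using h(1,2) t by (intro runs_Call) simp
  qed
qed

lemma then_branch:
  assumes i: "inv s" and o: "onered s"
  shows "runs s (Try (Call [r_move, r_ignore]) Skip (Seq (Call [r_set_flag]) Break))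
     (\<lambda>r c. c \<le> 60 \<and> (case r of ROk s' \<Rightarrow> Dst s' \<and> Pot s' \<le> Pot s | RBrk s' \<Rightarrow> DJ s' \<and> Pot s' \<le> Pot s
        | RFail \<Rightarrow> True))"
  apply (rule runs_Try[OF call_mi[OF i o]])
  subgoal for s2 c
    by (rule runs_Skip) simp
  subgoal for c
    apply (rule runs_Seq[OF call_setflag[OF i]])
    subgoal for s3 c3
      by (rule runs_Break) simp
    subgoal by simp
    subgoal by simp
    done
  subgoal by simp
  done

lemma loop_try:
  assumes d: "Dst s"
  shows "runs s (Try (Call [r_loop]) Skip Skip) (\<lambda>r c. c \<le> 30 \<and> (case r of ROk s1 \<Rightarrow> Dst s1 \<and> Pot s1 \<le> Pot s
     | _ \<Rightarrow> False))"
  apply (rule runs_Try[OF call_loop[OF d]])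
  subgoal for s2 c
    by (rule runs_Skip) simp
  subgoal for c
    by (rule runs_Skip) (simp add: d)
  subgoal by simp
  done

lemma Dst_DJ: "Dst s \<Longrightarrow> DJ s" unfolding Dst_def DJ_def by simp

lemma back_try:
  assumes d: "Dst s"
  shows "runs s (Try (Call [r_back]) Skip Break) (\<lambda>r c. c \<le> 30 \<and> (case r of ROk s1 \<Rightarrow> Dst s1 \<and> Pot s1 < Pot s
     | RBrk s1 \<Rightarrow> DJ s1 \<and> Pot s1 \<le> Pot s | RFail \<Rightarrow> False))"
  apply (rule runs_Try[OF call_back[OF d]])
  subgoal for s2 c
    by (rule runs_Skip) simp
  subgoal for c
    by (rule runs_Break) (simp add: Dst_DJ[OF d])
  subgoal by simp
  done

lemma else_branch:
  assumes d: "Dst s"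
  shows "runs s (Seq (Try (Call [r_loop]) Skip Skip) (Try (Call [r_back]) Skip Break))
    (\<lambda>r c. c \<le> 60 \<and> (case r of ROk s' \<Rightarrow> Dst s' \<and> Pot s' < Pot s
     | RBrk s' \<Rightarrow> DJ s' \<and> Pot s' \<le> Pot s | RFail \<Rightarrow> False))"
  apply (rule runs_Seq[OF loop_try[OF d]])
  subgoal premises p for s1 c
  proof -
    have d1: "Dst s1" and pl: "Pot s1 \<le> Pot s" and c: "c \<le> 30" using p by simp_all
    show ?thesis
      by (rule runs_conseq[OF back_try[OF d1]]) (use pl c in \<open>auto split: outcome.splits\<close>)
  qed
  subgoal by simp
  subgoal by simp
  done

lemma DFS_body:
  assumes d: "Dst s"
  shows "runs s DFS (\<lambda>r c. c \<le> 100 \<and> (case r of ROk s' \<Rightarrow> Dst s' \<and> Pot s' < Pot s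
     | RBrk s' \<Rightarrow> DJ s' \<and> Pot s' \<le> Pot s | RFail \<Rightarrow> True))"
  unfolding DFS_def
  apply (rule runs_Try[OF call_next[OF d]])
  subgoal premises p for s1 c
  proof -
    have i1: "inv s1" and o1: "onered s1" and pl: "Pot s1 < Pot s" and c: "c \<le> 11" using p by simp_all
    show ?thesis
      by (rule runs_conseq[OF then_branch[OF i1 o1]]) (use pl c in \<open>auto split: outcome.splits\<close>)
  qed
  subgoal premises p for c
  proof -
    have c: "c \<le> 11" using p by simp
    show ?thesis
      by (rule runs_conseq[OF else_branch[OF d]]) (use c in \<open>auto split: outcome.splits\<close>)
  qed
  subgoal by simp
  done

lemma dfs_loop:
  assumes d: "Dst s"
  shows "runs s (Loop DFS) (\<lambda>r c. \<exists>s'. r = ROk s' \<and> DJ s' \<and> Pot s' \<le> Pot s \<and>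
            c + (0 + 100 + 1) * Pot s' \<le> (0 + 100 + 1) * Pot s + (2 * 100 + 1))"
proof (rule runs_Loop[where I=Dst and J=DJ and K=0 and B=100, OF _ d])
  fix s assume d: "Dst s"
  show "runs s DFS (\<lambda>r c. case r of
        ROk s' \<Rightarrow> Dst s' \<and> Pot s' < Pot s \<and> c + 0 * Pot s' \<le> 0 * Pot s + 100
      | RBrk s' \<Rightarrow> DJ s' \<and> Pot s' \<le> Pot s \<and> c + 0 * Pot s' \<le> 0 * Pot s + 100
      | RFail \<Rightarrow> DJ s \<and> c \<le> 100)"
    by (rule runs_conseq[OF DFS_body[OF d]]) (auto simp: Dst_DJ[OF d] split: outcome.splits)
qed

lemma unroot_try:
  assumes dj: "DJ s"
  shows "runs s (Try (Call [r_unroot]) Skip Break) (\<lambda>r c. c \<le> 30 \<and> (case r of ROk s1 \<Rightarrow> Mst s1 \<and> Pot s1 < Pot s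
     | RBrk s1 \<Rightarrow> inv s1 \<and> Pot s1 \<le> Pot s | RFail \<Rightarrow> False))"
proof -
  have i: "inv s" using dj unfolding DJ_def by simp
  show ?thesis
    apply (rule runs_Try[OF call_unroot[OF dj]])
    subgoal for s2 c
      by (rule runs_Skip) simp
    subgoal for c
      by (rule runs_Break) (simp add: i)
    subgoal by simp
    done
qed

lemma inner:
  assumes d: "Dst s"
  shows "runs s (Seq (Loop DFS) (Try (Call [r_unroot]) Skip Break)) (\<lambda>r c. case r of
        ROk s' \<Rightarrow> Mst s' \<and> Pot s' < Pot s \<and> c + 101 * Pot s' \<le> 101 * Pot s + 231
      | RBrk s' \<Rightarrow> inv s' \<and> Pot s' \<le> Pot s \<and> c + 101 * Pot s' \<le> 101 * Pot s + 231
      | RFail \<Rightarrow> False)"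
  apply (rule runs_Seq[OF dfs_loop[OF d]])
  subgoal premises p for s2 c
  proof -
    have dj: "DJ s2" and pl: "Pot s2 \<le> Pot s" and cb: "c + 101 * Pot s2 \<le> 101 * Pot s + 201"
      using p by simp_all
    show ?thesis
    proof (rule runs_conseq[OF unroot_try[OF dj]])
      fix r and c' :: nat assume h: "c' \<le> 30 \<and> (case r of ROk s1 \<Rightarrow> Mst s1 \<and> Pot s1 < Pot s2
         | RBrk s1 \<Rightarrow> inv s1 \<and> Pot s1 \<le> Pot s2 | RFail \<Rightarrow> False)"
      show "case r of
        ROk s' \<Rightarrow> Mst s' \<and> Pot s' < Pot s \<and> c + c' + 101 * Pot s' \<le> 101 * Pot s + 231
      | RBrk s' \<Rightarrow> inv s' \<and> Pot s' \<le> Pot s \<and> c + c' + 101 * Pot s' \<le> 101 * Pot s + 231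
      | RFail \<Rightarrow> False"
      proof (cases r)
        case (ROk s3)
        with h have m: "Mst s3" and l: "Pot s3 < Pot s2" and c': "c' \<le> 30" by simp_all
        have "101 * Pot s3 \<le> 101 * Pot s2" using l by simp
        then show ?thesis using ROk m l c' cb pl by simp
      next
        case (RBrk s3)
        with h have m: "inv s3" and l: "Pot s3 \<le> Pot s2" and c': "c' \<le> 30" by simp_all
        have "101 * Pot s3 \<le> 101 * Pot s2" using l by simp
        then show ?thesis using RBrk m l c' cb pl by simp
      next
        case RFail
        with h show ?thesis by simp
      qed
    qed
  qed
  subgoal by simp
  subgoal by simp
  done

definition Body :: cmd where
  "Body = Seq (Call [r_init]) (Seq (Loop DFS) (Try (Call [r_unroot]) Skip Break))"

lemma body_M:
  assumes m: "Mst s"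
  shows "runs s Body (\<lambda>r c. case r of
        ROk s' \<Rightarrow> Mst s' \<and> Pot s' < Pot s \<and> c + 101 * Pot s' \<le> 101 * Pot s + 250
      | RBrk s' \<Rightarrow> inv s' \<and> Pot s' \<le> Pot s \<and> c + 101 * Pot s' \<le> 101 * Pot s + 250
      | RFail \<Rightarrow> inv s \<and> c \<le> 250)"
  unfolding Body_def
  apply (rule runs_Seq[OF call_init[OF m]])
  subgoal premises p for s1 c
  proof -
    have d1: "Dst s1" and pl: "Pot s1 < Pot s" and cb: "c \<le> 11" using p by simp_all
    have pm: "101 * Pot s1 \<le> 101 * Pot s" using pl by simp
    show ?thesis
      by (rule runs_conseq[OF inner[OF d1]]) (use pl cb pm in \<open>auto split: outcome.splits\<close>)
  qed
  subgoal using m unfolding Mst_def by simp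
  subgoal by simp
  done

lemma main_loop:
  assumes m: "Mst s"
  shows "runs s (Loop Body) (\<lambda>r c. \<exists>s'. r = ROk s' \<and> inv s' \<and> Pot s' \<le> Pot s \<and>
            c + (101 + 250 + 1) * Pot s' \<le> (101 + 250 + 1) * Pot s + (2 * 250 + 1))"
  by (rule runs_Loop[where I=Mst and J=inv and K=101 and B=250, OF body_M m])

lemma check_run:
  assumes i: "inv s"
  shows "runs s Check (\<lambda>r c. c \<le> 30)"
  unfolding Check_def
  apply (rule runs_If[OF call_flag[OF i]])
  subgoal for r c
    by (rule runs_Fail) simp
  subgoal for c
    by (rule runs_Skip) simp
  done

lemma is_dag_run:
  assumes m: "Mst s"
  shows "runs s is_dag (\<lambda>r c. c \<le> 352 * Pot s + 531)"
  unfolding is_dag_def Body_def[symmetric]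
  apply (rule runs_Seq[OF main_loop[OF m]])
  subgoal premises p for s2 c
  proof -
    have i: "inv s2" and cb: "c \<le> 352 * Pot s + 501" using p by auto
    show ?thesis by (rule runs_conseq[OF check_run[OF i]]) (use cb in simp)
  qed
  subgoal by simp
  subgoal by simp
  done

lemma cntV_le: "valid_rep s \<Longrightarrow> cntV k s \<le> card (V s)"
  unfolding cntV_def using valid_fin by (intro card_mono) auto

lemma cntE_le: "valid_rep s \<Longrightarrow> cntE k s \<le> card (E s)"
  unfolding cntE_def using valid_fin by (intro card_mono) auto

theorem mainTheorem5:
  shows "\<exists>c::nat. \<forall>s. valid_rep s \<and> (\<forall>v\<in>V s. nmk s v = NGrey \<and> \<not> rt s v)
            \<and> (\<forall>e\<in>E s. emk s e = EUnm)
         \<longrightarrow> (\<exists>f res t. exec f is_dag s = Some (res, t)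
                        \<and> t \<le> c * (card (V s) + card (E s) + 1))"
proof (rule exI[of _ 1500], intro allI impI)
  fix s assume h: "valid_rep s \<and> (\<forall>v\<in>V s. nmk s v = NGrey \<and> \<not> rt s v) \<and> (\<forall>e\<in>E s. emk s e = EUnm)"
  then have vr: "valid_rep s" and nv: "\<forall>v\<in>V s. nmk s v = NGrey \<and> \<not> rt s v"
    and ne: "\<forall>e\<in>E s. emk s e = EUnm" by auto
  have "roots1 s" unfolding roots1_def using nv by blast
  moreover have "dgrey s" unfolding dgrey_def using ne by simp
  moreover have "duniq s" unfolding duniq_def using ne by simp
  ultimately have i: "inv s" using vr unfolding inv_iff by blast
  have "noroot s" unfolding noroot_def using nv by blast
  moreover have "noredE s" unfolding noredE_def using ne by simp
  ultimately have m: "Mst s" using i unfolding Mst_def by blast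
  have "Pot s \<le> 3 * card (E s) + 4 * card (V s)"
    unfolding Pot_def using cntV_le[OF vr, of NGrey] cntV_le[OF vr, of NRed] cntE_le[OF vr, of EUnm] by simp
  then have b: "352 * Pot s + 531 \<le> 1500 * (card (V s) + card (E s) + 1)" by simp
  from is_dag_run[OF m] obtain f r c where "exec f is_dag s = Some (r, c)" "c \<le> 352 * Pot s + 531"
    unfolding runs_def by blast
  with b show "\<exists>f res t. exec f is_dag s = Some (res, t) \<and> t \<le> 1500 * (card (V s) + card (E s) + 1)"
    by (meson le_trans)
qed

end
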